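(* Let $0<\epsilon\le 1$ and $k\in[K]$. Suppose $\tau_j\ge 0$ independent samples of $(Y,V,pa(V))$ are drawn under arm $j$ for each $j\in[K]$, with $\sum_j\tau_j=\tau$ and $Z_k=\sum_{j\in[K]}\tau_j/M_{kj}>0$. Index all samples by $s\in\{1,\dots,\tau\}$, let $\mathcal{T}_j$ be the indices of samples from arm $j$, and for $s\in\mathcal{T}_j$ let $r_{kj}(s)=\mathrm{P}_k(V_j(s)\mid pa(V)_j(s))/\mathrm{P}_j(V_j(s)\mid pa(V)_j(s))$. Define $$\hat Y_k^{\epsilon}=\frac{1}{Z_k}\sum_{j\in[K]}\sum_{s\in\mathcal{T}_j}\frac{1}{M_{kj}}\,Y_j(s)\,r_{kj}(s)\,\mathbf{1}\big\{r_{kj}(s)\le 2\log(2/\epsilon)M_{kj}\big\}.$$ Then for every $\delta>0$, $$\mathbb{P}\Big(\mu_k-\delta-\tfrac{\epsilon}{2}\le \hat Y_k^{\epsilon}\le \mu_k+\delta\Big)\ge 1-2\exp\Big(-\frac{\delta^2\tau}{8(\log(2/\epsilon))^2}\Big(\frac{Z_k}{\tau}\Big)^2\Big).$$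
   Context: Setting: $\mathcal{G}$ is a causal directed acyclic graph viewed as a Bayesian network. $V$ is a node with parent set $pa(V)$; $V$ and $pa(V)$ take values in finite sets. $Y$ is a node downstream of $V$ with values in $[0,1]$. There are $K$ arms indexed by $[K]=\{0,\dots,K-1\}$: under arm $k$ the conditional law of $V$ given $pa(V)$ is a known conditional distribution $\mathrm{P}_k(V\mid pa(V))$ while all other conditionals (hence the marginal law of $pa(V)$) are unchanged; these conditionals are mutually absolutely continuous. $\mathbb{P}_k,\mathbb{E}_k$ denote probability/expectation under arm $k$, $\mu_k=\mathbb{E}_k[Y]$. A sample from arm $j$ is drawn from the joint law under arm $j$. Logarithms are natural. $D_f(\mathrm{P}_i\Vert\mathrm{P}_j)=\mathbb{E}_j\big[f\big(\mathrm{P}_i(V\mid pa(V))/\mathrm{P}_j(V\mid pa(V))\big)\big]$; $f_1(x)=x\exp(x-1)-1$; $M_{kj}=1+\log(1+D_{f_1}(\mathrm{P}_k\Vert\mathrm{P}_j))$. *)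

theory Defs
  imports "HOL-Probability.Probability"
begin

text \<open>Finite value sets of V and pa(V) are finite types 'v and 'p.
  q is the (arm-independent) marginal law of pa(V); Pc j p is the conditional law
  of V given pa(V)=p under arm j; L p v is the (arm-independent) conditional law of Y
  given (V,pa(V)) = (v,p). \<close>

definition joint :: "'p pmf \<Rightarrow> ('p \<Rightarrow> 'v pmf) \<Rightarrow> ('p \<Rightarrow> 'v \<Rightarrow> real measure)
    \<Rightarrow> (real \<times> 'v \<times> 'p) measure" where
  "joint q Pj L = bind (measure_pmf q) (\<lambda>p. bind (measure_pmf (Pj p)) (\<lambda>v.
      distr (L p v) (borel \<Otimes>\<^sub>M (count_space UNIV \<Otimes>\<^sub>M count_space UNIV)) (\<lambda>y. (y, v, p))))"

definition ratio :: "(nat \<Rightarrow> 'p \<Rightarrow> 'v pmf) \<Rightarrow> nat \<Rightarrow> nat \<Rightarrow> 'p \<Rightarrow> 'v \<Rightarrow> real" where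
  "ratio Pc k j p v = pmf (Pc k p) v / pmf (Pc j p) v"

definition f1 :: "real \<Rightarrow> real" where
  "f1 x = x * exp (x - 1) - 1"

definition Df1 :: "'p pmf \<Rightarrow> (nat \<Rightarrow> 'p \<Rightarrow> 'v pmf) \<Rightarrow> ('p \<Rightarrow> 'v \<Rightarrow> real measure)
    \<Rightarrow> nat \<Rightarrow> nat \<Rightarrow> real" where
  "Df1 q Pc L k j = (\<integral>x. f1 (ratio Pc k j (snd (snd x)) (fst (snd x))) \<partial>(joint q (Pc j) L))"

definition Mkj :: "'p pmf \<Rightarrow> (nat \<Rightarrow> 'p \<Rightarrow> 'v pmf) \<Rightarrow> ('p \<Rightarrow> 'v \<Rightarrow> real measure)
    \<Rightarrow> nat \<Rightarrow> nat \<Rightarrow> real" where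
  "Mkj q Pc L k j = 1 + ln (1 + Df1 q Pc L k j)"

definition mu :: "'p pmf \<Rightarrow> (nat \<Rightarrow> 'p \<Rightarrow> 'v pmf) \<Rightarrow> ('p \<Rightarrow> 'v \<Rightarrow> real measure)
    \<Rightarrow> nat \<Rightarrow> real" where
  "mu q Pc L k = (\<integral>x. fst x \<partial>(joint q (Pc k) L))"

definition sample_space :: "'p pmf \<Rightarrow> (nat \<Rightarrow> 'p \<Rightarrow> 'v pmf) \<Rightarrow> ('p \<Rightarrow> 'v \<Rightarrow> real measure)
    \<Rightarrow> (nat \<Rightarrow> nat) \<Rightarrow> nat \<Rightarrow> (nat \<Rightarrow> real \<times> 'v \<times> 'p) measure" where
  "sample_space q Pc L arm tau = (\<Pi>\<^sub>M s\<in>{1..tau}. joint q (Pc (arm s)) L)"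

definition Tset :: "(nat \<Rightarrow> nat) \<Rightarrow> nat \<Rightarrow> nat \<Rightarrow> nat set" where
  "Tset arm tau j = {s \<in> {1..tau}. arm s = j}"

definition Zk :: "'p pmf \<Rightarrow> (nat \<Rightarrow> 'p \<Rightarrow> 'v pmf) \<Rightarrow> ('p \<Rightarrow> 'v \<Rightarrow> real measure)
    \<Rightarrow> nat \<Rightarrow> (nat \<Rightarrow> nat) \<Rightarrow> nat \<Rightarrow> nat \<Rightarrow> real" where
  "Zk q Pc L K arm tau k = (\<Sum>j<K. real (card (Tset arm tau j)) / Mkj q Pc L k j)"

definition Yhat :: "'p pmf \<Rightarrow> (nat \<Rightarrow> 'p \<Rightarrow> 'v pmf) \<Rightarrow> ('p \<Rightarrow> 'v \<Rightarrow> real measure)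
    \<Rightarrow> nat \<Rightarrow> (nat \<Rightarrow> nat) \<Rightarrow> nat \<Rightarrow> real \<Rightarrow> nat \<Rightarrow> (nat \<Rightarrow> real \<times> 'v \<times> 'p) \<Rightarrow> real" where
  "Yhat q Pc L K arm tau \<epsilon> k \<omega> =
     (1 / Zk q Pc L K arm tau k) *
     (\<Sum>j<K. \<Sum>s\<in>Tset arm tau j.
        let r = ratio Pc k j (snd (snd (\<omega> s))) (fst (snd (\<omega> s)))
        in (1 / Mkj q Pc L k j) * fst (\<omega> s) * r *
           (if r \<le> 2 * ln (2 / \<epsilon>) * Mkj q Pc L k j then 1 else 0))"

end

theory Submission
  imports Defs
begin


abbreviation SS :: "(real \<times> 'v \<times> 'p) measure" where
  "SS \<equiv> borel \<Otimes>\<^sub>M (count_space UNIV \<Otimes>\<^sub>M count_space UNIV)"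

lemma inner_kernel:
  assumes "\<And>p v. prob_space (L p v)" "\<And>p v. sets (L p v) = sets borel"
  shows "(\<lambda>v. distr (L p v) SS (\<lambda>y. (y, v, p))) \<in> measure_pmf P \<rightarrow>\<^sub>M prob_algebra SS"
proof -
  have m: "(\<lambda>y. (y, v, p)) \<in> L p v \<rightarrow>\<^sub>M SS" for v
    using assms(2)[of p v] by (simp add: measurable_cong_sets[OF assms(2) refl])
  show ?thesis
    using m assms(1) by (auto simp: space_prob_algebra intro!: prob_space.prob_space_distr)
qed

lemma pmf_in_prob_algebra: "measure_pmf P \<in> space (prob_algebra (count_space UNIV))"
  by (simp add: space_prob_algebra measure_pmf.prob_space_axioms)

lemma mid_kernel:
  assumes "\<And>p v. prob_space (L p v)" "\<And>p v. sets (L p v) = sets borel"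
  shows "(\<lambda>p. measure_pmf (Pj p) \<bind> (\<lambda>v. distr (L p v) SS (\<lambda>y. (y, v, p)))) \<in> measure_pmf q \<rightarrow>\<^sub>M prob_algebra SS"
proof -
  have "measure_pmf (Pj p) \<bind> (\<lambda>v. distr (L p v) SS (\<lambda>y. (y, v, p))) \<in> space (prob_algebra SS)" for p
  proof -
    have k: "(\<lambda>v. distr (L p v) SS (\<lambda>y. (y, v, p))) \<in> count_space UNIV \<rightarrow>\<^sub>M prob_algebra SS"
      using inner_kernel[OF assms, where p=p and P="Pj p"] by (simp add: measurable_count_space_eq1)
    show ?thesis
      using prob_space_bind'[OF pmf_in_prob_algebra k] sets_bind'[OF pmf_in_prob_algebra k]
      by (simp add: space_prob_algebra)
  qed
  then show ?thesis by simp
qed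

lemma joint_prob:
  assumes "\<And>p v. prob_space (L p v)" "\<And>p v. sets (L p v) = sets borel"
  shows "prob_space (joint q Pj L)" and "sets (joint q Pj L) = sets SS"
proof -
  have k: "(\<lambda>p. measure_pmf (Pj p) \<bind> (\<lambda>v. distr (L p v) SS (\<lambda>y. (y, v, p)))) \<in> count_space UNIV \<rightarrow>\<^sub>M prob_algebra SS"
    using mid_kernel[OF assms, where Pj=Pj and q=q] by (simp add: measurable_count_space_eq1)
  show "prob_space (joint q Pj L)" "sets (joint q Pj L) = sets SS"
    unfolding joint_def
    using prob_space_bind'[OF pmf_in_prob_algebra k] sets_bind'[OF pmf_in_prob_algebra k] by auto
qed

lemma joint_integral:
  fixes q :: "('p::finite) pmf" and Pj :: "'p \<Rightarrow> ('v::finite) pmf" and F :: "real \<times> 'v \<times> 'p \<Rightarrow> real"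
  assumes "\<And>p v. prob_space (L p v)" "\<And>p v. sets (L p v) = sets borel"
    and F: "F \<in> borel_measurable SS" and B: "\<And>x. \<bar>F x\<bar> \<le> B"
  shows "(\<integral>x. F x \<partial>joint q Pj L) =
     (\<Sum>p\<in>UNIV. pmf q p * (\<Sum>v\<in>UNIV. pmf (Pj p) v * (\<integral>y. F (y, v, p) \<partial>L p v)))"
proof -
  have k1: "(\<lambda>p. measure_pmf (Pj p) \<bind> (\<lambda>v. distr (L p v) SS (\<lambda>y. (y, v, p)))) \<in> measure_pmf q \<rightarrow>\<^sub>M subprob_algebra SS"
    by (rule measurable_prob_algebraD[OF mid_kernel[OF assms(1,2)]])
  have k2: "(\<lambda>v. distr (L p v) SS (\<lambda>y. (y, v, p))) \<in> measure_pmf (Pj p) \<rightarrow>\<^sub>M subprob_algebra SS" for p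
    by (rule measurable_prob_algebraD[OF inner_kernel[OF assms(1,2)]])
  have m: "(\<lambda>y. (y, v, p)) \<in> L p v \<rightarrow>\<^sub>M SS" for v p
    by (simp add: measurable_cong_sets[OF assms(2) refl])
  have mp: "prob_space (measure_pmf (Pj p) \<bind> (\<lambda>v. distr (L p v) SS (\<lambda>y. (y, v, p))))" for p
    using measurable_space[OF mid_kernel[OF assms(1,2), where Pj=Pj and q=q], of p]
    by (simp add: space_prob_algebra)
  have ip: "prob_space (distr (L p v) SS (\<lambda>y. (y, v, p)))" for p v
    using measurable_space[OF inner_kernel[OF assms(1,2), where P="Pj p" and p=p], of v]
    by (simp add: space_prob_algebra)
  have "(\<integral>x. F x \<partial>joint q Pj L) = (\<integral>p. (\<integral>x. F x \<partial>(measure_pmf (Pj p) \<bind> (\<lambda>v. distr (L p v) SS (\<lambda>y. (y, v, p))))) \<partial>measure_pmf q)"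
    unfolding joint_def
    by (rule integral_bind[OF F B k1, where B'=1])
       (auto intro!: measure_pmf.finite_measure_axioms AE_I2 simp: prob_space.emeasure_le_1[OF mp])
  also have "\<dots> = (\<integral>p. (\<integral>v. (\<integral>x. F x \<partial>distr (L p v) SS (\<lambda>y. (y, v, p))) \<partial>measure_pmf (Pj p)) \<partial>measure_pmf q)"
    apply (rule Bochner_Integration.integral_cong[OF refl])
    by (rule integral_bind[OF F B k2, where B'=1])
       (auto intro!: measure_pmf.finite_measure_axioms AE_I2 simp: prob_space.emeasure_le_1[OF ip])
  also have "\<dots> = (\<integral>p. (\<integral>v. (\<integral>y. F (y, v, p) \<partial>L p v) \<partial>measure_pmf (Pj p)) \<partial>measure_pmf q)"
    apply (rule Bochner_Integration.integral_cong[OF refl])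
    apply (rule Bochner_Integration.integral_cong[OF refl])
    by (rule integral_distr[OF m F])
  also have "\<dots> = (\<Sum>p\<in>UNIV. pmf q p * (\<Sum>v\<in>UNIV. pmf (Pj p) v * (\<integral>y. F (y, v, p) \<partial>L p v)))"
    by (subst integral_measure_pmf[where A=UNIV], simp, simp, simp,
        subst integral_measure_pmf[where A=UNIV], simp, simp, simp)
  finally show ?thesis .
qed

lemma joint_AE:
  assumes "\<And>p v. prob_space (L p v)" "\<And>p v. sets (L p v) = sets borel"
    and R: "\<And>p v. AE y in L p v. 0 \<le> y \<and> y \<le> 1"
  shows "AE x in joint q Pj L. 0 \<le> fst x \<and> fst x \<le> 1"
proof -
  have k1: "(\<lambda>p. measure_pmf (Pj p) \<bind> (\<lambda>v. distr (L p v) SS (\<lambda>y. (y, v, p)))) \<in> measure_pmf q \<rightarrow>\<^sub>M subprob_algebra SS"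
    by (rule measurable_prob_algebraD[OF mid_kernel[OF assms(1,2)]])
  have k2: "(\<lambda>v. distr (L p v) SS (\<lambda>y. (y, v, p))) \<in> measure_pmf (Pj p) \<rightarrow>\<^sub>M subprob_algebra SS" for p
    by (rule measurable_prob_algebraD[OF inner_kernel[OF assms(1,2)]])
  have m: "(\<lambda>y. (y, v, p)) \<in> L p v \<rightarrow>\<^sub>M SS" for v p
    by (simp add: measurable_cong_sets[OF assms(2) refl])
  have P: "Measurable.pred SS (\<lambda>x. 0 \<le> fst x \<and> fst x \<le> 1)"
    by measurable
  show ?thesis
    unfolding joint_def
    apply (subst AE_bind[OF k1 P])
    apply (rule AE_I2)
    apply (subst AE_bind[OF k2 P])
    apply (rule AE_I2)
    apply (subst AE_distr_iff[OF m])
    using P apply (simp add: pred_def)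
    using R by simp
qed

lemma indep_coords:
  assumes I: "I \<noteq> {}" and P: "\<And>i. prob_space (M i)" and S: "\<And>i. sets (M i) = sets N"
  shows "prob_space.indep_vars (PiM I M) (\<lambda>_. N) (\<lambda>i \<omega>. \<omega> i) I"
proof -
  interpret product_prob_space M I
    by (intro product_prob_spaceI P)
  have rv: "(\<lambda>\<omega>. \<omega> i) \<in> PiM I M \<rightarrow>\<^sub>M N" if "i \<in> I" for i
    using measurable_component_singleton[OF that, of M] measurable_cong_sets[OF refl S] by blast
  have 1: "distr (PiM I M) (\<Pi>\<^sub>M i\<in>I. N) (\<lambda>x. \<lambda>i\<in>I. x i) = distr (PiM I M) (PiM I M) (\<lambda>x. x)"
    by (intro distr_cong refl sets_PiM_cong S[symmetric])
       (auto simp: space_PiM PiE_def extensional_restrict)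
  have 2: "(\<Pi>\<^sub>M i\<in>I. distr (PiM I M) N (\<lambda>x. x i)) = PiM I M"
  proof (rule PiM_cong[OF refl])
    fix i assume i: "i \<in> I"
    have "distr (PiM I M) N (\<lambda>x. x i) = distr (PiM I M) (M i) (\<lambda>x. x i)"
      by (intro distr_cong refl S[symmetric])
    also have "\<dots> = M i" by (rule PiM_component[OF i])
    finally show "distr (PiM I M) N (\<lambda>x. x i) = M i" .
  qed
  show ?thesis
    by (subst indep_vars_iff_distr_eq_PiM'[OF I rv]) (auto simp: 1 2 distr_id)
qed



lemma e_ub: "exp (1::real) \<le> 27183/10000"
  using e_approx_32 by (simp add: abs_if split: if_split_asm)

lemma ln2_lb: "(56/81::real) \<le> ln 2"
  using ln_approx_bounds[of 2 2] by (simp add: eval_nat_numeral)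

lemma exp_half_lb: "(6065/10000::real) \<le> exp (-1/2)"
proof -
  have "exp (1/2::real) * exp (1/2) = exp 1" by (simp flip: exp_add)
  hence "(exp (1/2::real))\<^sup>2 \<le> 27183/10000" using e_ub by (simp add: power2_eq_square)
  have "exp (1/2::real) \<le> 16488/10000"
  proof (rule ccontr)
    assume "\<not> exp (1/2::real) \<le> 16488/10000"
    hence "(16488/10000::real)^2 < (exp (1/2))^2"
      by (intro power_strict_mono) auto
    moreover have "(16488/10000::real)^2 = 271854144/100000000" by (simp add: power2_eq_square)
    ultimately show False using \<open>(exp (1/2::real))\<^sup>2 \<le> 27183/10000\<close> by linarith
  qed
  hence "1 / (16488/10000) \<le> 1 / exp (1/2::real)" by (intro divide_left_mono) auto
  thus ?thesis by (simp add: exp_minus field_simps)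
qed

lemma tangent:
  fixes x x0 :: real
  assumes "0 \<le> x"
  shows "exp (x0 - 1) * ((1 + x0) * x - x0\<^sup>2) \<le> x * exp (x - 1)"
proof -
  have "exp (x - 1) = exp (x0 - 1) * exp (x - x0)" by (simp flip: exp_add)
  moreover have "1 + (x - x0) \<le> exp (x - x0)" by (rule exp_ge_add_one_self)
  ultimately have "exp (x0 - 1) * (1 + (x - x0)) \<le> exp (x - 1)" by simp
  hence "x * (exp (x0 - 1) * (1 + (x - x0))) \<le> x * exp (x - 1)"
    using assms by (intro mult_left_mono) auto
  moreover have "exp (x0 - 1) * ((1 + x0) * x - x0\<^sup>2) \<le> x * (exp (x0 - 1) * (1 + (x - x0)))"
  proof -
    have "(1 + x0) * x - x0\<^sup>2 \<le> x * (1 + (x - x0))"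
    proof -
      have "x * (1 + (x - x0)) - ((1 + x0) * x - x0\<^sup>2) = (x - x0)\<^sup>2"
        by (simp add: power2_eq_square algebra_simps)
      thus ?thesis using zero_le_power2[of "x - x0"] by linarith
    qed
    hence "exp (x0 - 1) * ((1 + x0) * x - x0\<^sup>2) \<le> exp (x0 - 1) * (x * (1 + (x - x0)))"
      by (intro mult_left_mono) auto
    thus ?thesis by (simp add: ac_simps)
  qed
  ultimately show ?thesis by linarith
qed

lemma core:
  fixes u b A c :: real
  assumes u: "0 \<le> u" and b: "1 < b" and A: "0 < A" "1 \<le> A * b" and c: "0 \<le> c" "1 < A + c"
    and H: "A * exp (b * u) + c \<le> exp u"
  shows False
proof -
  have "exp (b * u) = exp u * exp ((b - 1) * u)" by (simp flip: exp_add add: algebra_simps)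
  moreover have "1 + (b - 1) * u \<le> exp ((b - 1) * u)" by (rule exp_ge_add_one_self)
  ultimately have "exp u * (1 + (b - 1) * u) \<le> exp (b * u)" by simp
  hence "A * (exp u * (1 + (b - 1) * u)) + c \<le> exp u" using H A
    by (smt (verit) mult_left_mono)
  hence H2: "c \<le> exp u * (1 - A - A * (b - 1) * u)" by (simp add: algebra_simps)
  show False
  proof (cases "1 - A - A * (b - 1) * u \<le> 0")
    case True
    hence "exp u * (1 - A - A * (b - 1) * u) \<le> 0" by (simp add: mult_nonneg_nonpos)
    hence "c = 0" using H2 c by linarith
    hence "A > 1" using c by simp
    hence "1 - A - A * (b - 1) * u < 0" using u b A
      by (smt (verit) mult_nonneg_nonneg)
    hence "exp u * (1 - A - A * (b - 1) * u) < 0" by (simp add: mult_pos_neg)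
    thus False using H2 \<open>c = 0\<close> by linarith
  next
    case False
    hence A1: "A < 1" using u b A by (smt (verit) mult_nonneg_nonneg)
    have "1 - A - A * (b - 1) * u \<le> (1 - A) * (1 - u)"
    proof -
      have "(1 - A) * (1 - u) - (1 - A - A * (b - 1) * u) = u * (A * b - 1)"
        by (simp add: algebra_simps)
      moreover have "0 \<le> u * (A * b - 1)" using A u by simp
      ultimately show ?thesis by linarith
    qed
    also have "\<dots> \<le> (1 - A) * exp (- u)"
      using A1 exp_ge_add_one_self[of "-u"] by (intro mult_left_mono) auto
    finally have "exp u * (1 - A - A * (b - 1) * u) \<le> exp u * ((1 - A) * exp (- u))"
      by (intro mult_left_mono) auto
    also have "\<dots> = 1 - A" by (simp add: exp_minus field_simps)
    finally show False using H2 c by linarith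
  qed
qed

lemma lin_aux: "(X::real) \<le> P \<Longrightarrow> w/2 \<le> W \<Longrightarrow> X = 6065 / 10000 * W - 60650 / 40000 * w + 18195 / 20000
 \<Longrightarrow> 40000 / 27183 * w \<le> Q \<Longrightarrow> 1/2 \<le> w \<Longrightarrow> 1 < Q + P"
  by linarith

lemma numeric:
  fixes z w :: real
  assumes z: "2 \<le> z" and w: "1 / z < w" "w \<le> 1"
  shows "1 \<le> (w * z\<^sup>2 / exp 1) * (2 * ln z)"
    and "1 < w * z\<^sup>2 / exp 1 + (1 - w) * exp (- w)"
proof -
  have zp: "0 < z" using z by simp
  have wz: "z < w * z\<^sup>2"
  proof -
    have "1 < w * z" using w zp by (simp add: field_simps)
    hence "1 * z < (w * z) * z" using zp by (intro mult_strict_right_mono) auto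
    thus ?thesis by (simp add: power2_eq_square ac_simps)
  qed
  have E: "exp 1 \<le> (27183/10000::real)" by (rule e_ub)
  have Ep: "0 < exp (1::real)" by simp
  have lz: "56/81 \<le> ln z"
  proof -
    have "ln 2 \<le> ln z" using z by simp
    thus ?thesis using ln2_lb by linarith
  qed
  have "(224/81::real) \<le> 2 * z * ln z"
  proof -
    have "2 * 2 * (56/81) \<le> 2 * z * ln z"
      using z lz by (intro mult_mono) auto
    thus ?thesis by simp
  qed
  also have "2 * z * ln z \<le> 2 * (w * z\<^sup>2) * ln z"
    using wz lz by (intro mult_right_mono mult_left_mono) auto
  finally have "exp 1 \<le> 2 * (w * z\<^sup>2) * ln z" using E by linarith
  thus "1 \<le> (w * z\<^sup>2 / exp 1) * (2 * ln z)" using Ep by (simp add: field_simps)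
  have e0: "0 \<le> (1 - w) * exp (- w)" using w by simp
  show "1 < w * z\<^sup>2 / exp 1 + (1 - w) * exp (- w)"
  proof (cases "exp 1 \<le> z")
    case True
    hence "exp 1 < w * z\<^sup>2" using wz by linarith
    hence "1 < w * z\<^sup>2 / exp 1" using Ep by (simp add: field_simps)
    thus ?thesis using e0 by linarith
  next
    case False
    have h: "6065/10000 \<le> exp (-1/2::real)" by (rule exp_half_lb)
    show ?thesis
    proof (cases "1/2 \<le> w")
      case True
      have "4 \<le> z\<^sup>2" using z by (metis power2_eq_square mult_mono zero_le_numeral order_trans[OF _ z] num_double numeral_times_numeral) 
      hence "w * 4 \<le> w * z\<^sup>2" using w True by (intro mult_left_mono) auto
      hence A: "w * 4 / (27183/10000) \<le> w * z\<^sup>2 / exp 1"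
        using E Ep True by (intro frac_le) auto
      have "exp (- w) = exp (-1/2) * exp (- (w - 1/2))" by (simp flip: exp_add)
      moreover have "1 + (- (w - 1/2)) \<le> exp (- (w - 1/2))" by (rule exp_ge_add_one_self)
      ultimately have "exp (-1/2) * (3/2 - w) \<le> exp (- w)" by simp
      moreover have "6065/10000 * (3/2 - w) \<le> exp (-1/2) * (3/2 - w)"
        using h w by (intro mult_right_mono) auto
      ultimately have f1: "(1 - w) * (6065/10000 * (3/2 - w)) \<le> (1 - w) * exp (- w)"
        using w by (intro mult_left_mono) auto
      have f2: "w / 2 \<le> w * w"
      proof -
        have "0 \<le> w * (w - 1/2)" using True by simp
        thus ?thesis by (simp add: algebra_simps)
      qed
      have f3: "(1 - w) * (6065/10000 * (3/2 - w)) = 6065/10000 * (w * w) - 60650/40000 * w + 18195/20000"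
        by (simp add: field_simps)
      have f4: "w * 4 / (27183/10000) = 40000/27183 * w" by simp
      show ?thesis using A f4 by (intro lin_aux[OF f1 f2 f3 _ True]) simp
    next
      case False
      have w0: "0 < w" using w zp by (smt (verit) divide_pos_pos)
      have "1 / w < z" using w w0 zp by (simp add: field_simps)
      hence "(1 / w)\<^sup>2 < z\<^sup>2" using w0 by (intro power_strict_mono) auto
      hence "w * (1 / w)\<^sup>2 < w * z\<^sup>2" using w0 by simp
      hence "1 / w < w * z\<^sup>2" using w0 by (simp add: power2_eq_square)
      moreover have "2 \<le> 1 / w" using False w0 by (simp add: field_simps)
      ultimately have "2 / (27183/10000) \<le> w * z\<^sup>2 / exp 1"
        using E Ep by (intro frac_le) auto
      hence "20000 / 27183 \<le> w * z\<^sup>2 / exp 1" by simp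
      moreover have ee: "exp (-1/2) \<le> exp (-w)" using False by simp
      have ee2: "6065/10000 \<le> exp (-w)" using h ee by linarith
      have "1/2 * (6065/10000) \<le> (1 - w) * exp (- w)"
        using False ee2 by (intro mult_mono) auto
      ultimately show ?thesis by linarith
    qed
  qed
qed

lemma S_ge1:
  fixes A :: "'i set" and a r :: "'i \<Rightarrow> real"
  assumes a0: "\<And>i. i \<in> A \<Longrightarrow> 0 \<le> a i" and r0: "\<And>i. i \<in> A \<Longrightarrow> 0 \<le> r i"
    and sa: "(\<Sum>i\<in>A. a i) = 1" and sar: "(\<Sum>i\<in>A. a i * r i) = 1"
  shows "1 \<le> (\<Sum>i\<in>A. a i * (r i * exp (r i - 1)))"
proof -
  have "(\<Sum>i\<in>A. a i * (exp (1 - 1) * ((1 + 1) * r i - 1\<^sup>2))) \<le> (\<Sum>i\<in>A. a i * (r i * exp (r i - 1)))"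
    using a0 r0 tangent[of _ 1] by (intro sum_mono mult_left_mono) auto
  moreover have "(\<Sum>i\<in>A. a i * (exp (1 - 1) * ((1 + 1) * r i - 1\<^sup>2))) = 2 * (\<Sum>i\<in>A. a i * r i) - (\<Sum>i\<in>A. a i)"
    by (simp add: sum_subtractf sum_distrib_left algebra_simps)
  ultimately show ?thesis using sa sar by simp
qed

lemma bias:
  fixes A :: "'i set" and a r :: "'i \<Rightarrow> real" and z :: real
  assumes fin: "finite A" and a0: "\<And>i. i \<in> A \<Longrightarrow> 0 \<le> a i" and r0: "\<And>i. i \<in> A \<Longrightarrow> 0 \<le> r i"
    and sa: "(\<Sum>i\<in>A. a i) = 1" and sar: "(\<Sum>i\<in>A. a i * r i) = 1" and z: "2 \<le> z"
  shows "(\<Sum>i\<in>{i\<in>A. 2 * ln z * (1 + ln (\<Sum>i\<in>A. a i * (r i * exp (r i - 1)))) < r i}. a i * r i) \<le> 1 / z"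
proof -
  define S where "S = (\<Sum>i\<in>A. a i * (r i * exp (r i - 1)))"
  define b where "b = 2 * ln z"
  define t where "t = b * (1 + ln S)"
  define T where "T = {i\<in>A. t < r i}"
  define w where "w = (\<Sum>i\<in>T. a i * r i)"
  have TA: "T \<subseteq> A" by (auto simp: T_def)
  have finT: "finite T" "finite (A - T)" using fin TA by (auto intro: finite_subset)
  have S1: "1 \<le> S"
  proof -
    have "(\<Sum>i\<in>A. a i * (exp (1 - 1) * ((1 + 1) * r i - 1\<^sup>2))) \<le> S"
      unfolding S_def using a0 r0 tangent[of _ 1] by (intro sum_mono mult_left_mono) auto
    moreover have "(\<Sum>i\<in>A. a i * (exp (1 - 1) * ((1 + 1) * r i - 1\<^sup>2))) = 2 * (\<Sum>i\<in>A. a i * r i) - (\<Sum>i\<in>A. a i)"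
      by (simp add: sum_subtractf sum_distrib_left algebra_simps)
    ultimately show ?thesis using sa sar by simp
  qed
  have w0: "0 \<le> w" unfolding w_def using a0 r0 TA by (intro sum_nonneg) auto
  have wsplit: "(\<Sum>i\<in>A. a i * r i) = w + (\<Sum>i\<in>A - T. a i * r i)"
    unfolding w_def using sum.subset_diff[OF TA fin] by (simp add: add.commute)
  have w1: "w \<le> 1"
  proof -
    have "0 \<le> (\<Sum>i\<in>A - T. a i * r i)" using a0 r0 by (intro sum_nonneg) auto
    thus ?thesis using wsplit sar by linarith
  qed
  have lz: "56/81 \<le> ln z"
  proof -
    have "ln 2 \<le> ln z" using z by simp
    thus ?thesis using ln2_lb by linarith
  qed
  have b1: "1 < b" using lz by (simp add: b_def)
  show ?thesis
  proof (rule ccontr)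
    assume "\<not> ?thesis"
    hence wz: "1 / z < w" unfolding w_def T_def t_def b_def S_def by simp
    have tail: "w * exp (t - 1) \<le> (\<Sum>i\<in>T. a i * (r i * exp (r i - 1)))"
      unfolding w_def sum_distrib_right
    proof (intro sum_mono)
      fix i assume i: "i \<in> T"
      hence "t < r i" "i \<in> A" by (auto simp: T_def)
      hence "exp (t - 1) \<le> exp (r i - 1)" by simp
      hence "r i * exp (t - 1) \<le> r i * exp (r i - 1)" using r0[OF \<open>i \<in> A\<close>] by (intro mult_left_mono) auto
      thus "a i * r i * exp (t - 1) \<le> a i * (r i * exp (r i - 1))"
        using a0[OF \<open>i \<in> A\<close>] by (simp add: mult.assoc mult_left_mono)
    qed
    define x0 where "x0 = 1 - w"
    have rest: "(1 - w) * exp (- w) \<le> (\<Sum>i\<in>A - T. a i * (r i * exp (r i - 1)))"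
    proof -
      have "(\<Sum>i\<in>A - T. a i * (exp (x0 - 1) * ((1 + x0) * r i - x0\<^sup>2))) \<le> (\<Sum>i\<in>A - T. a i * (r i * exp (r i - 1)))"
        using a0 r0 tangent[of _ x0] by (intro sum_mono mult_left_mono) auto
      moreover have "(\<Sum>i\<in>A - T. a i * (exp (x0 - 1) * ((1 + x0) * r i - x0\<^sup>2))) =
          exp (x0 - 1) * ((1 + x0) * (\<Sum>i\<in>A - T. a i * r i) - x0\<^sup>2 * (\<Sum>i\<in>A - T. a i))"
        by (simp add: sum_subtractf sum_distrib_left sum_distrib_right algebra_simps)
      moreover have "(\<Sum>i\<in>A - T. a i) \<le> 1"
      proof -
        have "(\<Sum>i\<in>A - T. a i) \<le> (\<Sum>i\<in>A. a i)" using a0 fin by (intro sum_mono2) auto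
        thus ?thesis using sa by simp
      qed
      moreover have "(\<Sum>i\<in>A - T. a i * r i) = 1 - w" using wsplit sar by simp
      ultimately have "exp (x0 - 1) * ((1 + x0) * (1 - w) - x0\<^sup>2) \<le> (\<Sum>i\<in>A - T. a i * (r i * exp (r i - 1)))"
      proof -
        assume h1: "(\<Sum>i\<in>A - T. a i * (exp (x0 - 1) * ((1 + x0) * r i - x0\<^sup>2))) \<le> (\<Sum>i\<in>A - T. a i * (r i * exp (r i - 1)))"
          and h2: "(\<Sum>i\<in>A - T. a i * (exp (x0 - 1) * ((1 + x0) * r i - x0\<^sup>2))) =
          exp (x0 - 1) * ((1 + x0) * (\<Sum>i\<in>A - T. a i * r i) - x0\<^sup>2 * (\<Sum>i\<in>A - T. a i))"
          and h3: "(\<Sum>i\<in>A - T. a i) \<le> 1" and h4: "(\<Sum>i\<in>A - T. a i * r i) = 1 - w"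
        have "x0\<^sup>2 * (\<Sum>i\<in>A - T. a i) \<le> x0\<^sup>2 * 1" using h3 by (intro mult_left_mono) auto
        hence "exp (x0 - 1) * ((1 + x0) * (1 - w) - x0\<^sup>2) \<le> exp (x0 - 1) * ((1 + x0) * (\<Sum>i\<in>A - T. a i * r i) - x0\<^sup>2 * (\<Sum>i\<in>A - T. a i))"
          using h4 by (intro mult_left_mono) auto
        thus ?thesis using h1 h2 by linarith
      qed
      moreover have "exp (x0 - 1) * ((1 + x0) * (1 - w) - x0\<^sup>2) = (1 - w) * exp (- w)"
        by (simp add: x0_def power2_eq_square algebra_simps)
      ultimately show ?thesis by linarith
    qed
    have Ssplit: "S = (\<Sum>i\<in>T. a i * (r i * exp (r i - 1))) + (\<Sum>i\<in>A - T. a i * (r i * exp (r i - 1)))"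
      unfolding S_def using sum.subset_diff[OF TA fin] by (simp add: add.commute)
    define u where "u = ln S"
    have u0: "0 \<le> u" using S1 by (simp add: u_def)
    have eu: "exp u = S" using S1 by (simp add: u_def)
    have ebz: "exp b = z\<^sup>2"
    proof -
      have "b = ln z + ln z" by (simp add: b_def)
      hence "exp b = exp (ln z) * exp (ln z)" by (simp only: exp_add)
      thus ?thesis using z by (simp add: power2_eq_square)
    qed
    have "exp (t - 1) = exp b / exp 1 * exp (b * u)"
      by (simp add: t_def u_def algebra_simps exp_add[symmetric] exp_diff)
    hence et: "exp (t - 1) = z\<^sup>2 / exp 1 * exp (b * u)" using ebz by simp
    define AA where "AA = w * z\<^sup>2 / exp 1"
    have H: "AA * exp (b * u) + (1 - w) * exp (- w) \<le> exp u"
      using tail rest Ssplit eu et by (simp add: AA_def algebra_simps)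
    have n1: "1 \<le> AA * b" using numeric(1)[OF z wz w1] by (simp add: AA_def b_def)
    have n2: "1 < AA + (1 - w) * exp (- w)" using numeric(2)[OF z wz w1] by (simp add: AA_def)
    have "0 < w" using wz z by (smt (verit) divide_pos_pos)
    hence AA0: "0 < AA" using z by (simp add: AA_def)
    show False
      by (rule core[OF u0 b1 AA0 n1 _ n2 H]) (use w1 in simp)
  qed
qed



lemma KI:
  assumes "p \<in> set_pmf q \<Longrightarrow> set_pmf (Pc j p) = set_pmf (Pc k p)"
  shows "pmf q p * (pmf (Pc j p) v * ratio Pc k j p v) = pmf q p * pmf (Pc k p) v"
proof (cases "pmf q p = 0")
  case False
  hence p: "p \<in> set_pmf q" by (simp add: set_pmf_iff)
  show ?thesis
  proof (cases "pmf (Pc j p) v = 0")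
    case True
    hence "v \<notin> set_pmf (Pc j p)" by (simp add: set_pmf_iff)
    hence "v \<notin> set_pmf (Pc k p)" using assms[OF p] by simp
    hence "pmf (Pc k p) v = 0" by (simp add: set_pmf_iff)
    thus ?thesis using True by simp
  qed (simp add: ratio_def)
qed simp

definition clampm :: "('p \<Rightarrow> 'v \<Rightarrow> real measure) \<Rightarrow> 'p \<Rightarrow> 'v \<Rightarrow> real" where
  "clampm L p v = (\<integral>y. max 0 (min 1 y) \<partial>L p v)"

lemma clampm_bounds:
  assumes "prob_space (L p v)" "sets (L p v) = sets borel"
  shows "0 \<le> clampm L p v" "clampm L p v \<le> 1"
proof -
  interpret prob_space "L p v" by fact
  have m: "(\<lambda>y::real. max 0 (min 1 y)) \<in> borel_measurable (L p v)"
    by (simp add: measurable_cong_sets[OF assms(2) refl])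
  have i: "integrable (L p v) (\<lambda>y::real. max 0 (min 1 y))"
    by (rule integrable_const_bound[where B=1]) (auto simp: m)
  show "0 \<le> clampm L p v" unfolding clampm_def by (rule integral_nonneg_AE) simp
  show "clampm L p v \<le> 1" unfolding clampm_def by (intro integral_le_const i) auto
qed

lemma meas_G:
  fixes G :: "'v::finite \<Rightarrow> 'p::finite \<Rightarrow> real"
  shows "(\<lambda>x. G (fst (snd x)) (snd (snd x))) \<in> borel_measurable (SS :: (real \<times> 'v \<times> 'p) measure)"
proof -
  have "(\<lambda>x. G (fst x) (snd x)) \<in> borel_measurable (count_space (UNIV::'v set) \<Otimes>\<^sub>M count_space (UNIV :: 'p set))"
    by (subst pair_measure_countable) (auto intro: countable_finite)
  thus ?thesis by measurable
qed

lemma bound_G: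
  fixes G :: "'v::finite \<Rightarrow> 'p::finite \<Rightarrow> real"
  shows "\<bar>G v p\<bar> \<le> (\<Sum>x\<in>UNIV. \<bar>G (fst x) (snd x)\<bar>)"
  using member_le_sum[of "(v,p)" UNIV "\<lambda>x. \<bar>G (fst x) (snd x)\<bar>"] by simp

lemma joint_fstG:
  fixes q :: "('p::finite) pmf" and Pj :: "'p \<Rightarrow> ('v::finite) pmf" and G :: "'v \<Rightarrow> 'p \<Rightarrow> real"
  assumes LP: "\<And>p v. prob_space (L p v)" and LS: "\<And>p v. sets (L p v) = sets borel"
    and R: "\<And>p v. AE y in L p v. 0 \<le> y \<and> y \<le> 1"
  shows "(\<integral>x. fst x * G (fst (snd x)) (snd (snd x)) \<partial>joint q Pj L) =
     (\<Sum>p\<in>UNIV. pmf q p * (\<Sum>v\<in>UNIV. pmf (Pj p) v * (clampm L p v * G v p)))"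
proof -
  define B where "B = (\<Sum>x\<in>UNIV. \<bar>G (fst x) (snd x)\<bar>)"
  have "(\<integral>x. fst x * G (fst (snd x)) (snd (snd x)) \<partial>joint q Pj L) =
        (\<integral>x. max 0 (min 1 (fst x)) * G (fst (snd x)) (snd (snd x)) \<partial>joint q Pj L)"
    by (rule integral_cong_AE)
       (auto simp: measurable_cong_sets[OF joint_prob(2)[OF LP LS] refl] intro!: meas_G
             intro: eventually_mono[OF joint_AE[OF LP LS R]])
  also have "\<dots> = (\<Sum>p\<in>UNIV. pmf q p * (\<Sum>v\<in>UNIV. pmf (Pj p) v *
       (\<integral>y. max 0 (min 1 (fst (y, v, p))) * G (fst (snd (y, v, p))) (snd (snd (y, v, p))) \<partial>L p v)))"
  proof (rule joint_integral[OF LP LS])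
    show "(\<lambda>x. max 0 (min 1 (fst x)) * G (fst (snd x)) (snd (snd x))) \<in> borel_measurable SS"
      using meas_G[of G] by measurable
    fix x :: "real \<times> 'v \<times> 'p"
    have "\<bar>max 0 (min 1 (fst x))\<bar> \<le> 1" by simp
    moreover have "\<bar>G (fst (snd x)) (snd (snd x))\<bar> \<le> B" unfolding B_def by (rule bound_G)
    ultimately show "\<bar>max 0 (min 1 (fst x)) * G (fst (snd x)) (snd (snd x))\<bar> \<le> B"
      unfolding abs_mult using mult_mono[of "\<bar>max 0 (min 1 (fst x))\<bar>" 1 "\<bar>G (fst (snd x)) (snd (snd x))\<bar>" B]
      by simp
  qed
  also have "\<dots> = (\<Sum>p\<in>UNIV. pmf q p * (\<Sum>v\<in>UNIV. pmf (Pj p) v * (clampm L p v * G v p)))"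
    by (simp add: clampm_def)
  finally show ?thesis .
qed

lemma joint_G:
  fixes q :: "('p::finite) pmf" and Pj :: "'p \<Rightarrow> ('v::finite) pmf" and G :: "'v \<Rightarrow> 'p \<Rightarrow> real"
  assumes LP: "\<And>p v. prob_space (L p v)" and LS: "\<And>p v. sets (L p v) = sets borel"
  shows "(\<integral>x. G (fst (snd x)) (snd (snd x)) \<partial>joint q Pj L) =
     (\<Sum>p\<in>UNIV. pmf q p * (\<Sum>v\<in>UNIV. pmf (Pj p) v * G v p))"
proof -
  have "(\<integral>x. G (fst (snd x)) (snd (snd x)) \<partial>joint q Pj L) =
     (\<Sum>p\<in>UNIV. pmf q p * (\<Sum>v\<in>UNIV. pmf (Pj p) v * (\<integral>y. G (fst (snd (y, v, p))) (snd (snd (y, v, p))) \<partial>L p v)))"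
    by (rule joint_integral[OF LP LS meas_G bound_G])
  also have "\<dots> = (\<Sum>p\<in>UNIV. pmf q p * (\<Sum>v\<in>UNIV. pmf (Pj p) v * G v p))"
    using LP by (simp add: prob_space.prob_space)
  finally show ?thesis .
qed



lemma sum_pairs:
  fixes Q :: "'p::finite \<Rightarrow> real" and P :: "'p \<Rightarrow> 'v::finite \<Rightarrow> real"
  shows "(\<Sum>p\<in>UNIV. Q p * (\<Sum>v\<in>UNIV. P p v * h p v)) = (\<Sum>x\<in>UNIV. Q (fst x) * P (fst x) (snd x) * h (fst x) (snd x))"
proof -
  have "(\<Sum>p\<in>UNIV. Q p * (\<Sum>v\<in>UNIV. P p v * h p v)) = (\<Sum>p\<in>UNIV. \<Sum>v\<in>UNIV. Q p * P p v * h p v)"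
    by (simp add: sum_distrib_left mult.assoc)
  also have "\<dots> = (\<Sum>x\<in>UNIV \<times> UNIV. Q (fst x) * P (fst x) (snd x) * h (fst x) (snd x))"
    by (subst sum.cartesian_product) (simp add: case_prod_beta)
  finally show ?thesis by simp
qed

lemma arm_lemma:
  fixes q :: "('p::finite) pmf" and Pc :: "nat \<Rightarrow> 'p \<Rightarrow> ('v::finite) pmf" and \<epsilon> :: real
  assumes LP: "\<And>p v. prob_space (L p v)" and LS: "\<And>p v. sets (L p v) = sets borel"
    and R: "\<And>p v. AE y in L p v. 0 \<le> y \<and> y \<le> 1"
    and ac: "\<And>p. p \<in> set_pmf q \<Longrightarrow> set_pmf (Pc j p) = set_pmf (Pc k p)"
    and eps: "0 < \<epsilon>" "\<epsilon> \<le> 1"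
  defines "MM \<equiv> Mkj q Pc L k j"
  defines "EE \<equiv> (\<integral>x. fst x * (ratio Pc k j (snd (snd x)) (fst (snd x)) *
                 (if ratio Pc k j (snd (snd x)) (fst (snd x)) \<le> 2 * ln (2 / \<epsilon>) * MM then 1 else 0)) \<partial>joint q (Pc j) L)"
  shows "1 \<le> MM" "mu q Pc L k - \<epsilon> / 2 \<le> EE" "EE \<le> mu q Pc L k"
proof -
  define a where "a = (\<lambda>x::'p \<times> 'v. pmf q (fst x) * pmf (Pc j (fst x)) (snd x))"
  define r where "r = (\<lambda>x::'p \<times> 'v. ratio Pc k j (fst x) (snd x))"
  define bk where "bk = (\<lambda>x::'p \<times> 'v. pmf q (fst x) * pmf (Pc k (fst x)) (snd x))"
  define m where "m = (\<lambda>x::'p \<times> 'v. clampm L (fst x) (snd x))"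
  have a0: "0 \<le> a x" for x by (simp add: a_def)
  have r0: "0 \<le> r x" for x by (simp add: r_def ratio_def)
  have bk0: "0 \<le> bk x" for x by (simp add: bk_def)
  have ar: "a x * r x = bk x" for x
    unfolding a_def r_def bk_def using KI[of "fst x" q Pc j k "snd x", OF ac] by (simp add: mult.assoc)
  have m01: "0 \<le> m x" "m x \<le> 1" for x using clampm_bounds[of L "fst x" "snd x", OF LP LS] by (auto simp: m_def)
  have one: "(\<Sum>x\<in>UNIV. pmf q (fst x) * pmf (P (fst x)) (snd x) * 1) = 1" for P :: "'p \<Rightarrow> 'v pmf"
  proof -
    have "(\<Sum>x\<in>UNIV. pmf q (fst x) * pmf (P (fst x)) (snd x) * 1) = (\<Sum>p\<in>UNIV. pmf q p * (\<Sum>v\<in>UNIV. pmf (P p) v * 1))"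
      by (rule sum_pairs[where Q="pmf q" and P="\<lambda>p v. pmf (P p) v" and h="\<lambda>p v. 1", symmetric])
    also have "\<dots> = (\<Sum>p\<in>UNIV. pmf q p)" by (simp add: sum_pmf_eq_1)
    also have "\<dots> = 1" by (simp add: sum_pmf_eq_1)
    finally show ?thesis .
  qed
  have sa: "(\<Sum>x\<in>UNIV. a x) = 1" using one[of "Pc j"] by (simp add: a_def)
  have sar: "(\<Sum>x\<in>UNIV. a x * r x) = 1" using one[of "Pc k"] by (simp add: ar bk_def)
  have D: "Df1 q Pc L k j = (\<Sum>x\<in>UNIV. a x * (r x * exp (r x - 1))) - 1"
  proof -
    have "Df1 q Pc L k j = (\<Sum>p\<in>UNIV. pmf q p * (\<Sum>v\<in>UNIV. pmf (Pc j p) v * f1 (ratio Pc k j p v)))"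
      unfolding Df1_def by (rule joint_G[OF LP LS, where G="\<lambda>v p. f1 (ratio Pc k j p v)"])
    also have "\<dots> = (\<Sum>x\<in>UNIV. a x * (r x * exp (r x - 1) - 1))"
      by (subst sum_pairs) (simp add: a_def r_def f1_def)
    also have "\<dots> = (\<Sum>x\<in>UNIV. a x * (r x * exp (r x - 1))) - (\<Sum>x\<in>UNIV. a x)"
      by (simp add: algebra_simps sum_subtractf)
    finally show ?thesis using sa by simp
  qed
  define S where "S = (\<Sum>x\<in>UNIV. a x * (r x * exp (r x - 1)))"
  have S1: "1 \<le> S" unfolding S_def by (rule S_ge1[OF a0 r0 sa sar])
  have MMS: "MM = 1 + ln S" unfolding MM_def Mkj_def D S_def by simp
  show "1 \<le> MM" using S1 MMS by simp
  define z where "z = 2 / \<epsilon>"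
  have z2: "2 \<le> z" using eps by (simp add: z_def field_simps)
  define cM where "cM = 2 * ln (2 / \<epsilon>) * MM"
  have cMeq: "cM = 2 * ln z * (1 + ln S)" by (simp add: cM_def MMS z_def)
  have bb: "(\<Sum>x\<in>{x\<in>UNIV. cM < r x}. a x * r x) \<le> \<epsilon> / 2"
    using bias[OF _ a0 r0 sa sar z2] by (simp add: cMeq S_def z_def)
  define ind where "ind = (\<lambda>x. if r x \<le> cM then 1 else (0::real))"
  have mu: "mu q Pc L k = (\<Sum>x\<in>UNIV. bk x * m x)"
  proof -
    have "mu q Pc L k = (\<integral>x. fst x * (\<lambda>v p. 1) (fst (snd x)) (snd (snd x)) \<partial>joint q (Pc k) L)"
      by (simp add: mu_def)
    also have "\<dots> = (\<Sum>p\<in>UNIV. pmf q p * (\<Sum>v\<in>UNIV. pmf (Pc k p) v * (clampm L p v * 1)))"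
      by (rule joint_fstG[OF LP LS R])
    also have "\<dots> = (\<Sum>x\<in>UNIV. bk x * m x)"
      by (subst sum_pairs) (simp add: bk_def m_def)
    finally show ?thesis .
  qed
  have EE: "EE = (\<Sum>x\<in>UNIV. bk x * m x * ind x)"
  proof -
    have "EE = (\<integral>x. fst x * (\<lambda>v p. ratio Pc k j p v * (if ratio Pc k j p v \<le> cM then 1 else 0)) (fst (snd x)) (snd (snd x)) \<partial>joint q (Pc j) L)"
      by (simp add: EE_def cM_def)
    also have "\<dots> = (\<Sum>p\<in>UNIV. pmf q p * (\<Sum>v\<in>UNIV. pmf (Pc j p) v * (clampm L p v * (ratio Pc k j p v * (if ratio Pc k j p v \<le> cM then 1 else 0)))))"
      by (rule joint_fstG[OF LP LS R])
    also have "\<dots> = (\<Sum>x\<in>UNIV. a x * (m x * (r x * ind x)))"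
      by (subst sum_pairs) (simp add: a_def m_def r_def ind_def mult.assoc)
    also have "\<dots> = (\<Sum>x\<in>UNIV. bk x * m x * ind x)"
      by (intro sum.cong refl) (simp add: ar[symmetric] ac_simps)
    finally show ?thesis .
  qed
  have diff: "mu q Pc L k - EE = (\<Sum>x\<in>UNIV. bk x * m x * (1 - ind x))"
    by (simp add: mu EE sum_subtractf algebra_simps)
  have "0 \<le> (\<Sum>x\<in>UNIV. bk x * m x * (1 - ind x))"
    using bk0 m01 by (intro sum_nonneg) (simp add: ind_def)
  thus "EE \<le> mu q Pc L k" using diff by simp
  have "(\<Sum>x\<in>UNIV. bk x * m x * (1 - ind x)) \<le> (\<Sum>x\<in>UNIV. bk x * (1 - ind x))"
    using bk0 m01 by (intro sum_mono) (simp add: ind_def mult_left_le)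
  also have "\<dots> = (\<Sum>x\<in>UNIV. if cM < r x then bk x else 0)"
    by (intro sum.cong) (auto simp: ind_def)
  also have "\<dots> = (\<Sum>x\<in>{x\<in>UNIV. cM < r x}. bk x)"
    by (rule sum.inter_filter[symmetric]) simp
  also have "\<dots> = (\<Sum>x\<in>{x\<in>UNIV. cM < r x}. a x * r x)"
    by (simp add: ar)
  finally show "mu q Pc L k - \<epsilon> / 2 \<le> EE" using bb diff by simp
qed



theorem theorem4:
  fixes q :: "('p::finite) pmf"
    and Pc :: "nat \<Rightarrow> 'p \<Rightarrow> ('v::finite) pmf"
    and L :: "'p \<Rightarrow> 'v \<Rightarrow> real measure"
    and K k tau :: nat and arm :: "nat \<Rightarrow> nat" and \<epsilon> \<delta> :: real
  assumes L_prob: "\<And>p v. prob_space (L p v)"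
    and L_sets: "\<And>p v. sets (L p v) = sets borel"
    and L_range: "\<And>p v. AE y in L p v. 0 \<le> y \<and> y \<le> 1"
    and abs_cont: "\<And>i j p. i < K \<Longrightarrow> j < K \<Longrightarrow> p \<in> set_pmf q \<Longrightarrow>
                     set_pmf (Pc i p) = set_pmf (Pc j p)"
    and eps: "0 < \<epsilon>" "\<epsilon> \<le> 1"
    and k: "k < K"
    and arm: "\<And>s. s \<in> {1..tau} \<Longrightarrow> arm s < K"
    and Zpos: "Zk q Pc L K arm tau k > 0"
    and delta: "\<delta> > 0"
  shows "measure (sample_space q Pc L arm tau)
           {\<omega> \<in> space (sample_space q Pc L arm tau).
              mu q Pc L k - \<delta> - \<epsilon> / 2 \<le> Yhat q Pc L K arm tau \<epsilon> k \<omega> \<and>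
              Yhat q Pc L K arm tau \<epsilon> k \<omega> \<le> mu q Pc L k + \<delta>}
         \<ge> 1 - 2 * exp (- (\<delta>\<^sup>2 * real tau / (8 * (ln (2 / \<epsilon>))\<^sup>2))
                          * (Zk q Pc L K arm tau k / real tau)\<^sup>2)"
proof -
  define J where "J = (\<lambda>s. joint q (Pc (arm s)) L)"
  define I where "I = {1..tau}"
  define Z where "Z = Zk q Pc L K arm tau k"
  define MM where "MM = (\<lambda>j. Mkj q Pc L k j)"
  define G where "G = (\<lambda>j (v::'v) (p::'p). ratio Pc k j p v * (if ratio Pc k j p v \<le> 2 * ln (2 / \<epsilon>) * MM j then 1 else (0::real)))"
  define g where "g = (\<lambda>j (x::real \<times> 'v \<times> 'p). (1 / Z * (1 / MM j)) * (fst x * G j (fst (snd x)) (snd (snd x))))"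
  define X where "X = (\<lambda>s \<omega>. g (arm s) (\<omega> s))"
  define EE where "EE = (\<lambda>j. \<integral>x. fst x * G j (fst (snd x)) (snd (snd x)) \<partial>joint q (Pc j) L)"
  define \<mu>S where "\<mu>S = (\<Sum>s\<in>I. (1 / Z * (1 / MM (arm s))) * EE (arm s))"
  have PS: "sample_space q Pc L arm tau = PiM I J" by (simp add: sample_space_def I_def J_def)
  have Jp: "prob_space (J s)" for s unfolding J_def by (rule joint_prob(1)[OF L_prob L_sets])
  have Js: "sets (J s) = sets SS" for s unfolding J_def by (rule joint_prob(2)[OF L_prob L_sets])
  interpret P: prob_space "PiM I J" by (rule prob_space_PiM) (simp add: Jp)
  have finI: "finite I" by (simp add: I_def)
  have ac: "\<And>p. p \<in> set_pmf q \<Longrightarrow> set_pmf (Pc j p) = set_pmf (Pc k p)" if "j < K" for j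
    using abs_cont[OF that k] by blast
  have AL: "1 \<le> MM j" "mu q Pc L k - \<epsilon> / 2 \<le> EE j" "EE j \<le> mu q Pc L k" if "j < K" for j
    using arm_lemma[where q=q and Pc=Pc and L=L and j=j and k=k, OF L_prob L_sets L_range ac[OF that] eps] unfolding MM_def EE_def G_def
    by (auto simp: mult.assoc)
  have armI: "arm s < K" if "s \<in> I" for s using arm that by (simp add: I_def)
  have group: "(\<Sum>j<K. \<Sum>s\<in>Tset arm tau j. F j s) = (\<Sum>s\<in>I. F (arm s) s)" for F :: "nat \<Rightarrow> nat \<Rightarrow> real"
  proof -
    have "(\<Sum>j<K. \<Sum>s\<in>Tset arm tau j. F j s) = (\<Sum>j\<in>{..<K}. \<Sum>s\<in>{s\<in>I. arm s = j}. F (arm s) s)"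
      by (intro sum.cong refl) (auto simp: Tset_def I_def)
    also have "\<dots> = (\<Sum>s\<in>I. F (arm s) s)"
      by (rule sum.group) (use finI armI in auto)
    finally show ?thesis .
  qed
  have Zeq: "Z = (\<Sum>s\<in>I. 1 / MM (arm s))"
  proof -
    have "Z = (\<Sum>j<K. \<Sum>s\<in>Tset arm tau j. 1 / MM j)"
      by (simp add: Z_def Zk_def MM_def)
    also have "\<dots> = (\<Sum>s\<in>I. 1 / MM (arm s))" by (rule group)
    finally show ?thesis .
  qed
  have Z0: "0 < Z" using Zpos by (simp add: Z_def)
  have tau0: "0 < tau"
  proof (rule ccontr)
    assume "\<not> 0 < tau"
    hence "I = {}" by (simp add: I_def)
    thus False using Zeq Z0 by simp
  qed
  have Yhat_eq: "Yhat q Pc L K arm tau \<epsilon> k \<omega> = (\<Sum>s\<in>I. X s \<omega>)" for \<omega>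
  proof -
    have "Yhat q Pc L K arm tau \<epsilon> k \<omega> = (1 / Z) * (\<Sum>s\<in>I. (1 / MM (arm s)) * (fst (\<omega> s) * G (arm s) (fst (snd (\<omega> s))) (snd (snd (\<omega> s)))))"
      unfolding Yhat_def Z_def[symmetric] Let_def
      by (subst group) (simp add: G_def MM_def ac_simps)
    also have "\<dots> = (\<Sum>s\<in>I. X s \<omega>)"
      by (simp add: sum_distrib_left X_def g_def ac_simps)
    finally show ?thesis .
  qed
  have gm: "g j \<in> borel_measurable SS" for j
    using meas_G[of "G j"] unfolding g_def by measurable
  have Xm[measurable]: "X s \<in> borel_measurable (PiM I J)" if "s \<in> I" for s
  proof -
    have "(\<lambda>\<omega>. \<omega> s) \<in> PiM I J \<rightarrow>\<^sub>M SS"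
      using measurable_component_singleton[OF that, of J] measurable_cong_sets[OF refl Js] by blast
    thus ?thesis unfolding X_def using gm by (rule measurable_compose)
  qed
  have EX: "P.expectation (X s) = (1 / Z * (1 / MM (arm s))) * EE (arm s)" if s: "s \<in> I" for s
  proof -
    have "(\<lambda>\<omega>. \<omega> s) \<in> PiM I J \<rightarrow>\<^sub>M J s"
      by (rule measurable_component_singleton[OF s])
    have gm': "g (arm s) \<in> borel_measurable (J s)" using gm measurable_cong_sets[OF Js refl] by blast
    have "P.expectation (X s) = (\<integral>x. g (arm s) x \<partial>distr (PiM I J) (J s) (\<lambda>\<omega>. \<omega> s))"
      unfolding X_def by (rule integral_distr[symmetric]) fact+
    also have "\<dots> = (\<integral>x. g (arm s) x \<partial>J s)"
      by (subst distr_PiM_component[OF Jp s]) simp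
    also have "\<dots> = (1 / Z * (1 / MM (arm s))) * EE (arm s)"
      by (simp add: g_def EE_def J_def)
    finally show ?thesis .
  qed
  have muS_bounds: "mu q Pc L k - \<epsilon> / 2 \<le> \<mu>S" "\<mu>S \<le> mu q Pc L k"
  proof -
    have w0: "0 \<le> 1 / Z * (1 / MM (arm s))" if "s \<in> I" for s
      using Z0 AL(1)[OF armI[OF that]] by simp
    have "(\<Sum>s\<in>I. (1 / Z * (1 / MM (arm s))) * (mu q Pc L k - \<epsilon> / 2)) \<le> \<mu>S"
      unfolding \<mu>S_def using w0 AL(2)[OF armI] by (intro sum_mono mult_left_mono) auto
    moreover have "(\<Sum>s\<in>I. (1 / Z * (1 / MM (arm s))) * (mu q Pc L k - \<epsilon> / 2)) = (1 / Z) * (\<Sum>s\<in>I. 1 / MM (arm s)) * (mu q Pc L k - \<epsilon> / 2)"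
      by (simp add: sum_distrib_left sum_distrib_right ac_simps)
    ultimately show "mu q Pc L k - \<epsilon> / 2 \<le> \<mu>S" using Zeq Z0 by simp
    have "\<mu>S \<le> (\<Sum>s\<in>I. (1 / Z * (1 / MM (arm s))) * mu q Pc L k)"
      unfolding \<mu>S_def using w0 AL(3)[OF armI] by (intro sum_mono mult_left_mono) auto
    moreover have "(\<Sum>s\<in>I. (1 / Z * (1 / MM (arm s))) * mu q Pc L k) = (1 / Z) * (\<Sum>s\<in>I. 1 / MM (arm s)) * mu q Pc L k"
      by (simp add: sum_distrib_left sum_distrib_right ac_simps)
    ultimately show "\<mu>S \<le> mu q Pc L k" using Zeq Z0 by simp
  qed
  define c where "c = 2 * ln (2 / \<epsilon>)"
  have lpos: "0 < ln (2 / \<epsilon>)" using eps by (simp add: field_simps)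
  have cpos: "0 < c" using lpos by (simp add: c_def)
  have Xrange: "AE \<omega> in PiM I J. X s \<omega> \<in> {0 .. c / Z}" if s: "s \<in> I" for s
  proof -
    have "AE x in J s. 0 \<le> fst x \<and> fst x \<le> 1"
      unfolding J_def by (rule joint_AE[OF L_prob L_sets L_range])
    hence "AE x in J s. g (arm s) x \<in> {0 .. c / Z}"
    proof (rule eventually_mono)
      fix x :: "real \<times> 'v \<times> 'p" assume y: "0 \<le> fst x \<and> fst x \<le> 1"
      define j where "j = arm s"
      have M1: "1 \<le> MM j" using AL(1)[OF armI[OF s]] by (simp add: j_def)
      define rr where "rr = ratio Pc k j (snd (snd x)) (fst (snd x))"
      have rr0: "0 \<le> rr" by (simp add: rr_def ratio_def)
      have G0: "0 \<le> G j (fst (snd x)) (snd (snd x))" "G j (fst (snd x)) (snd (snd x)) \<le> c * MM j"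
        using rr0 M1 lpos by (auto simp: G_def rr_def[symmetric] c_def)
      have "0 \<le> fst x * G j (fst (snd x)) (snd (snd x))" using y G0 by simp
      moreover have "fst x * G j (fst (snd x)) (snd (snd x)) \<le> 1 * (c * MM j)"
        using y G0 by (intro mult_mono) auto
      moreover have wj: "0 \<le> 1 / Z * (1 / MM j)" using Z0 M1 by simp
      ultimately have "0 \<le> (1 / Z * (1 / MM j)) * (fst x * G j (fst (snd x)) (snd (snd x)))"
        "(1 / Z * (1 / MM j)) * (fst x * G j (fst (snd x)) (snd (snd x))) \<le> (1 / Z * (1 / MM j)) * (1 * (c * MM j))"
        by (simp, intro mult_left_mono) auto
      moreover have "(1 / Z * (1 / MM j)) * (1 * (c * MM j)) = c / Z" using M1 by simp
      ultimately show "g (arm s) x \<in> {0 .. c / Z}" by (simp add: g_def j_def)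
    qed
    thus ?thesis unfolding X_def by (rule AE_PiM_component[OF Jp s])
  qed
  have indep: "P.indep_vars (\<lambda>_. borel) X I"
  proof -
    have "P.indep_vars (\<lambda>_. SS) (\<lambda>i \<omega>. \<omega> i) I"
      using tau0 by (intro indep_coords Jp Js) (auto simp: I_def)
    hence "P.indep_vars (\<lambda>_. borel) (\<lambda>i \<omega>. g (arm i) (\<omega> i)) I"
      by (rule P.indep_vars_compose2) (rule gm)
    thus ?thesis by (simp add: X_def)
  qed
  interpret H: Hoeffding_ineq "PiM I J" I X "\<lambda>_. 0" "\<lambda>_. c / Z" \<mu>S
  proof unfold_locales
    show "finite I" by fact
    show "P.indep_vars (\<lambda>_. borel) X I" by fact
    show "\<And>i. i \<in> I \<Longrightarrow> AE x in PiM I J. X i x \<in> {0..c / Z}" by (rule Xrange)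
    show "\<mu>S \<equiv> \<Sum>i\<in>I. P.expectation (X i)" by (simp add: \<mu>S_def EX)
  qed
  define Bset where "Bset = {\<omega> \<in> space (PiM I J). \<bar>(\<Sum>i\<in>I. X i \<omega>) - \<mu>S\<bar> \<ge> \<delta>}"
  have sumsq: "(\<Sum>i\<in>I. (c / Z - 0)\<^sup>2) = real tau * (c / Z)\<^sup>2" by (simp add: I_def)
  have sq0: "(\<Sum>i\<in>I. (c / Z - 0)\<^sup>2) > 0" using sumsq tau0 cpos Z0 by simp
  have HB: "P.prob Bset \<le> 2 * exp (-2 * \<delta>\<^sup>2 / (real tau * (c / Z)\<^sup>2))"
  proof -
    have "P.prob Bset \<le> 2 * exp (-2 * \<delta>\<^sup>2 / (\<Sum>i\<in>I. (c / Z - 0)\<^sup>2))"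
      unfolding Bset_def using delta by (intro H.Hoeffding_ineq_abs_ge sq0) simp
    thus ?thesis by (simp only: sumsq)
  qed
  have summ[measurable]: "(\<lambda>\<omega>. \<Sum>i\<in>I. X i \<omega>) \<in> borel_measurable (PiM I J)"
    by (intro borel_measurable_sum Xm)
  have Bev: "Bset \<in> P.events" unfolding Bset_def by measurable
  define Tset' where "Tset' = {\<omega> \<in> space (PiM I J). mu q Pc L k - \<delta> - \<epsilon> / 2 \<le> (\<Sum>i\<in>I. X i \<omega>) \<and> (\<Sum>i\<in>I. X i \<omega>) \<le> mu q Pc L k + \<delta>}"
  have Tev: "Tset' \<in> P.events" unfolding Tset'_def by measurable
  have sub: "space (PiM I J) - Bset \<subseteq> Tset'"
    using muS_bounds by (auto simp: Bset_def Tset'_def abs_less_iff not_le)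
  have "1 - P.prob Bset = P.prob (space (PiM I J) - Bset)" using P.prob_compl[OF Bev] by simp
  also have "\<dots> \<le> P.prob Tset'" by (rule P.finite_measure_mono[OF sub Tev])
  finally have T1: "1 - 2 * exp (-2 * \<delta>\<^sup>2 / (real tau * (c / Z)\<^sup>2)) \<le> P.prob Tset'" using HB by linarith
  define l where "l = ln (2 / \<epsilon>)"
  define K0 where "K0 = \<delta>\<^sup>2 * Z\<^sup>2 / (real tau * l\<^sup>2)"
  have K00: "0 \<le> K0" by (simp add: K0_def)
  have e1: "-2 * \<delta>\<^sup>2 / (real tau * (c / Z)\<^sup>2) = - K0 / 2"
    using Z0 lpos tau0 by (simp add: K0_def c_def l_def field_simps power2_eq_square)
  have e2: "- (\<delta>\<^sup>2 * real tau / (8 * l\<^sup>2)) * (Z / real tau)\<^sup>2 = - K0 / 8"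
    using Z0 lpos tau0 by (simp add: K0_def l_def field_simps power2_eq_square)
  have "exp (-2 * \<delta>\<^sup>2 / (real tau * (c / Z)\<^sup>2)) \<le> exp (- (\<delta>\<^sup>2 * real tau / (8 * l\<^sup>2)) * (Z / real tau)\<^sup>2)"
    unfolding e1 e2 using K00 by simp
  hence "1 - 2 * exp (- (\<delta>\<^sup>2 * real tau / (8 * l\<^sup>2)) * (Z / real tau)\<^sup>2) \<le> P.prob Tset'"
    using T1 by linarith
  moreover have "Tset' = {\<omega> \<in> space (sample_space q Pc L arm tau).
              mu q Pc L k - \<delta> - \<epsilon> / 2 \<le> Yhat q Pc L K arm tau \<epsilon> k \<omega> \<and>
              Yhat q Pc L K arm tau \<epsilon> k \<omega> \<le> mu q Pc L k + \<delta>}"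
    by (simp add: Tset'_def PS Yhat_eq)
  ultimately show ?thesis by (simp add: PS Z_def l_def)
qed

end
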